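(* Let $m,n\geq2$ and let $V\subset[m]\times[n]$ with $|V|=m+n-1$. Then $V$ is a tree if and only if $\det(\mathfrak A(V))\neq0$.
   Context: Write $V=\phi(S)$ with $S=\{i_1<\dots<i_{m+n-1}\}\subset[mn]$, where $\phi(i)=(t,r)$ for $i=(t-1)n+r$, $t\in[m]$, $r\in[n]$. The structure matrix $\mathfrak A(V)=(a_{s,k})$ is the $(m+n-1)\times(m+n-1)$ matrix with, for $\phi(i_k)=(t,r)$: $a_{s,k}=1$ if $s=t<m$; $a_{s,k}=1$ if $s=m$; $a_{s,k}=1$ if $s=m+r<m+n$; $a_{s,k}=0$ otherwise. Graph notions on $[m]\times[n]$: distinct points adjacent iff they share a row or column; a circuit is a cyclic sequence $v_0,\dots,v_{s-1}$ ($s\ge4$) of pairwise distinct points $v_k=(i_k,j_k)$ with (indices mod $s$) $v_k,v_{k+1}$ adjacent and $(i_{k+2}-i_k)(j_{k+2}-j_k)\neq0$ for all $k$; a tree is a connected subset (any two points joined by a path of adjacent points in it) containing no circuit. *)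

theory Defs
  imports "Jordan_Normal_Form.Determinant"
begin

text \<open>Points of the grid [m] x [n] are pairs (t, r) of naturals, 1-based.\<close>

definition phi :: "nat \<Rightarrow> nat \<Rightarrow> nat \<times> nat" where
  "phi n i = ((i - 1) div n + 1, (i - 1) mod n + 1)"

definition phi_inv :: "nat \<Rightarrow> nat \<times> nat \<Rightarrow> nat" where
  "phi_inv n p = (fst p - 1) * n + snd p"

definition grid :: "nat \<Rightarrow> nat \<Rightarrow> (nat \<times> nat) set" where
  "grid m n = {1..m} \<times> {1..n}"

text \<open>The index set S with V = phi(S); i_k is the k-th smallest element (k 0-based here).\<close>
definition idx_set :: "nat \<Rightarrow> (nat \<times> nat) set \<Rightarrow> nat set" where
  "idx_set n V = phi_inv n ` V"

definition structure_matrix :: "nat \<Rightarrow> nat \<Rightarrow> (nat \<times> nat) set \<Rightarrow> int mat" where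
  "structure_matrix m n V =
     mat (m + n - 1) (m + n - 1)
       (\<lambda>(s0, k). let s = s0 + 1;
                      tr = phi n (sorted_list_of_set (idx_set n V) ! k);
                      t = fst tr; r = snd tr
                  in if (s = t \<and> t < m) \<or> s = m \<or> (s = m + r \<and> m + r < m + n)
                     then 1 else 0)"

definition adjacent :: "nat \<times> nat \<Rightarrow> nat \<times> nat \<Rightarrow> bool" where
  "adjacent p q \<longleftrightarrow> p \<noteq> q \<and> (fst p = fst q \<or> snd p = snd q)"

definition is_circuit_in :: "(nat \<times> nat) set \<Rightarrow> nat \<Rightarrow> (nat \<Rightarrow> nat \<times> nat) \<Rightarrow> bool" where
  "is_circuit_in V s v \<longleftrightarrow> s \<ge> 4 \<and> (\<forall>k<s. v k \<in> V) \<and> inj_on v {..<s} \<and>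
     (\<forall>k<s. adjacent (v k) (v ((k + 1) mod s)) \<and>
        (int (fst (v ((k + 2) mod s))) - int (fst (v k))) *
        (int (snd (v ((k + 2) mod s))) - int (snd (v k))) \<noteq> 0)"

definition connected_set :: "(nat \<times> nat) set \<Rightarrow> bool" where
  "connected_set V \<longleftrightarrow> (\<forall>p\<in>V. \<forall>q\<in>V. \<exists>xs. xs \<noteq> [] \<and> hd xs = p \<and> last xs = q \<and>
       set xs \<subseteq> V \<and> (\<forall>i. Suc i < length xs \<longrightarrow> adjacent (xs ! i) (xs ! Suc i)))"

definition is_tree :: "(nat \<times> nat) set \<Rightarrow> bool" where
  "is_tree V \<longleftrightarrow> connected_set V \<and> \<not> (\<exists>s v. is_circuit_in V s v)"

end

theory Submission
  imports Defs
begin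

lemma circuit_intro:
  fixes v :: "nat \<Rightarrow> nat \<times> nat"
  assumes ev: "even s" and s2: "s \<ge> 2" and inj: "inj_on v {..<s}" and inV: "\<forall>k<s. v k \<in> V"
    and stE: "\<forall>k<s. even (c+k) \<longrightarrow> fst (v k) = fst (v ((k+1) mod s))"
    and stO: "\<forall>k<s. odd (c+k) \<longrightarrow> snd (v k) = snd (v ((k+1) mod s))"
  shows "is_circuit_in V s v"
proof -
  have dist: "v k \<noteq> v ((k+1) mod s)" if "k < s" for k
  proof -
    have "k \<noteq> (k+1) mod s"
    proof (cases "k+1 < s")
      case True then show ?thesis by simp
    next
      case False then have "k + 1 = s" using that by simp
      then show ?thesis using s2 by auto
    qed
    moreover have "(k+1) mod s < s" using s2 by simp
    ultimately show ?thesis using inj that by (simp add: inj_on_eq_iff)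
  qed
  have par: "even (c + (k+1) mod s) \<longleftrightarrow> odd (c+k)" if "k < s" for k
  proof (cases "k+1 < s")
    case True then show ?thesis by simp
  next
    case False then have "k + 1 = s" using that by simp
    then show ?thesis using ev by auto
  qed
  have k2: "(k+2) mod s = ((k+1) mod s + 1) mod s" for k
    by (simp add: mod_Suc_eq)
  have main: "adjacent (v k) (v ((k + 1) mod s)) \<and>
        (int (fst (v ((k + 2) mod s))) - int (fst (v k))) *
        (int (snd (v ((k + 2) mod s))) - int (snd (v k))) \<noteq> 0" if k: "k < s" for k
  proof -
    define k1 where "k1 = (k+1) mod s"
    have k1s: "k1 < s" using s2 by (simp add: k1_def)
    have kk2: "(k+2) mod s = (k1+1) mod s" using k2 by (simp add: k1_def)
    have d0: "v k \<noteq> v k1" using dist k by (simp add: k1_def)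
    have d1: "v k1 \<noteq> v ((k1+1) mod s)" using dist k1s by simp
    show ?thesis
    proof (cases "even (c+k)")
      case True
      have a: "fst (v k) = fst (v k1)" using stE k True by (simp add: k1_def)
      have b: "snd (v k1) = snd (v ((k1+1) mod s))" using stO k1s par[OF k] True by (simp add: k1_def)
      have "snd (v k) \<noteq> snd (v k1)" using a d0 by (simp add: prod_eq_iff)
      moreover have "fst (v k1) \<noteq> fst (v ((k1+1) mod s))" using b d1 by (simp add: prod_eq_iff)
      ultimately show ?thesis using a b d0 unfolding kk2 adjacent_def k1_def[symmetric] by auto
    next
      case False
      have a: "snd (v k) = snd (v k1)" using stO k False by (simp add: k1_def)
      have b: "fst (v k1) = fst (v ((k1+1) mod s))" using stE k1s par[OF k] False by (simp add: k1_def)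
      have "fst (v k) \<noteq> fst (v k1)" using a d0 by (simp add: prod_eq_iff)
      moreover have "snd (v k1) \<noteq> snd (v ((k1+1) mod s))" using b d1 by (simp add: prod_eq_iff)
      ultimately show ?thesis using a b d0 unfolding kk2 adjacent_def k1_def[symmetric] by auto
    qed
  qed
  have "s \<noteq> 2"
  proof
    assume s: "s = 2"
    have "v 0 \<noteq> v 1" using dist[of 0] s by simp
    moreover have "even c \<longrightarrow> fst (v 0) = fst (v 1)" using stE[rule_format, of 0] s by simp
    moreover have "odd c \<longrightarrow> fst (v 1) = fst (v 0)" using stE[rule_format, of 1] s by simp
    moreover have "odd c \<longrightarrow> snd (v 0) = snd (v 1)" using stO[rule_format, of 0] s by simp
    moreover have "even c \<longrightarrow> snd (v 1) = snd (v 0)" using stO[rule_format, of 1] s by simp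
    ultimately show False by (cases "even c") (auto simp: prod_eq_iff)
  qed
  then have "s \<ge> 4" using ev s2 by (auto elim!: evenE)
  then show ?thesis unfolding is_circuit_in_def using main inj inV by blast
qed


lemma nxt_ex:
  fixes W :: "(nat \<times> nat) set"
  assumes rowP: "\<forall>p\<in>W. \<exists>q\<in>W. q \<noteq> p \<and> fst q = fst p"
    and colP: "\<forall>p\<in>W. \<exists>q\<in>W. q \<noteq> p \<and> snd q = snd p" and pW: "p \<in> W"
  shows "\<exists>q. q \<in> W \<and> q \<noteq> p \<and> (if even i then fst q = fst p else snd q = snd p)"
    proof (cases "even i")
      case True
      obtain q where "q \<in> W" "q \<noteq> p" "fst q = fst p" using rowP pW by blast
      then show ?thesis using True by (rule_tac exI[of _ q]) simp
    next
      case False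
      obtain q where "q \<in> W" "q \<noteq> p" "snd q = snd p" using colP pW by blast
      then show ?thesis using False by (rule_tac exI[of _ q]) simp
    qed

lemma circ_from_support:
  fixes W V :: "(nat \<times> nat) set"
  assumes fin: "finite W" and ne: "p0 \<in> W" and sub: "W \<subseteq> V"
    and rowP: "\<forall>p\<in>W. \<exists>q\<in>W. q \<noteq> p \<and> fst q = fst p"
    and colP: "\<forall>p\<in>W. \<exists>q\<in>W. q \<noteq> p \<and> snd q = snd p"
  shows "\<exists>s v. is_circuit_in V s v"
proof -
  define nxt where "nxt i p = (SOME q. q \<in> W \<and> q \<noteq> p \<and> (if even i then fst q = fst p else snd q = snd p))"
    for i :: nat and p :: "nat \<times> nat"
  have nxt: "nxt i p \<in> W \<and> nxt i p \<noteq> p \<and> (if even i then fst (nxt i p) = fst p else snd (nxt i p) = snd p)"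
    if "p \<in> W" for i p
  proof -
    have "\<exists>q. q \<in> W \<and> q \<noteq> p \<and> (if even i then fst q = fst p else snd q = snd p)"
      using nxt_ex[OF rowP colP that] .
    then show ?thesis unfolding nxt_def by (rule someI_ex[where P = "\<lambda>q. q \<in> W \<and> q \<noteq> p \<and> (if even i then fst q = fst p else snd q = snd p)"])
  qed
  define f where "f = rec_nat p0 (\<lambda>i p. nxt i p)"
  have f0: "f 0 = p0" and fS: "f (Suc i) = nxt i (f i)" for i by (simp_all add: f_def)
  have fW: "f i \<in> W" for i
  proof (induction i)
    case 0 show ?case using ne by (simp add: f0)
  next
    case (Suc i) show ?case using nxt[OF Suc.IH, of i] by (simp add: fS)
  qed
  have st: "f (Suc i) \<noteq> f i \<and> (even i \<longrightarrow> fst (f (Suc i)) = fst (f i)) \<and> (odd i \<longrightarrow> snd (f (Suc i)) = snd (f i))" for i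
    using nxt[OF fW[of i], of i] by (auto simp: fS split: if_splits)
  have "\<not> inj_on f {..card W}"
  proof
    assume "inj_on f {..card W}"
    then have "card (f ` {..card W}) = card W + 1" by (simp add: card_image)
    moreover have "card (f ` {..card W}) \<le> card W" using fW fin by (intro card_mono) auto
    ultimately show False by simp
  qed
  then obtain a b where "a \<noteq> b" "f a = f b" unfolding inj_on_def by blast
  then have ex: "\<exists>j. \<exists>i<j. f i = f j"
  proof (cases "a < b")
    case True then show ?thesis using \<open>f a = f b\<close> by blast
  next
    case False then have "b < a" using \<open>a \<noteq> b\<close> by simp
    then show ?thesis using \<open>f a = f b\<close> by metis
  qed
  define j0 where "j0 = (LEAST j. \<exists>i<j. f i = f j)"
  obtain i where ij: "i < j0" "f i = f j0" using LeastI_ex[OF ex] unfolding j0_def by blast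
  have minj: "f a \<noteq> f b" if "a < b" "b < j0" for a b
    using not_less_Least[of b "\<lambda>j. \<exists>i<j. f i = f j"] that unfolding j0_def by blast
  show ?thesis
  proof (cases "even (j0 - i)")
    case True
    define s where "s = j0 - i"
    define v where "v k = f (i + k)" for k
    have s1: "s \<noteq> 1"
    proof
      assume "s = 1" then have "j0 = Suc i" using ij by (simp add: s_def)
      then show False using st[of i] ij by simp
    qed
    have s2: "s \<ge> 2" using s1 ij by (auto simp: s_def)
    have evs: "even s" using True by (simp add: s_def)
    have inj: "inj_on v {..<s}"
    proof (rule inj_onI, rule ccontr)
      fix a b assume ab: "a \<in> {..<s}" "b \<in> {..<s}" "v a = v b" "a \<noteq> b"
      show False
      proof (cases "a < b")
        case True then show ?thesis using minj[of "i+a" "i+b"] ab by (auto simp: v_def s_def)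
      next
        case False then show ?thesis using minj[of "i+b" "i+a"] ab(1,2,4) ab(3)[symmetric] by (auto simp: v_def s_def)
      qed
    qed
    have vn: "v ((k+1) mod s) = f (Suc (i + k))" if "k < s" for k
    proof (cases "k + 1 < s")
      case True then show ?thesis by (simp add: v_def)
    next
      case False then have "k + 1 = s" using that by simp
      then have "Suc (i + k) = j0" using ij by (simp add: s_def)
      then show ?thesis using ij \<open>k + 1 = s\<close> by (simp add: v_def)
    qed
    have "is_circuit_in V s v"
      by (rule circuit_intro[OF evs s2 inj, where c = i])
        (use fW sub st vn in \<open>auto simp: v_def\<close>)
    then show ?thesis by blast
  next
    case False
    define s where "s = j0 - i - 1"
    define v where "v k = f (i + 1 + k)" for k
    have "j0 - i \<noteq> 1"
    proof
      assume "j0 - i = 1" then have "j0 = Suc i" using ij by simp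
      then show False using st[of i] ij by simp
    qed
    moreover obtain d where d: "j0 - i = 2*d+1" using False by (rule oddE)
    ultimately have "j0 - i \<ge> 3" by simp
    then have s2: "s \<ge> 2" by (simp add: s_def)
    have evs: "even s" using False ij by (simp add: s_def)
    have inj: "inj_on v {..<s}"
    proof (rule inj_onI, rule ccontr)
      fix a b assume ab: "a \<in> {..<s}" "b \<in> {..<s}" "v a = v b" "a \<noteq> b"
      show False
      proof (cases "a < b")
        case True then show ?thesis using minj[of "i+1+a" "i+1+b"] ab by (auto simp: v_def s_def)
      next
        case False then show ?thesis using minj[of "i+1+b" "i+1+a"] ab(1,2,4) ab(3)[symmetric] by (auto simp: v_def s_def)
      qed
    qed
    have vE: "fst (v k) = fst (v ((k+1) mod s))" if "k < s" "even (i + 1 + k)" for k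
    proof (cases "k + 1 < s")
      case True then show ?thesis using st[of "i+1+k"] that by (simp add: v_def)
    next
      case False then have k: "k + 1 = s" using that by simp
      then have j: "Suc (i + 1 + k) = j0" using s2 by (simp add: s_def)
      have "even i" using k that evs by auto
      then have "fst (f (Suc i)) = fst (f i)" using st[of i] by simp
      moreover have "fst (f j0) = fst (f (i+1+k))" using st[of "i+1+k"] that j by simp
      ultimately show ?thesis using k ij by (simp add: v_def)
    qed
    have vO: "snd (v k) = snd (v ((k+1) mod s))" if "k < s" "odd (i + 1 + k)" for k
    proof (cases "k + 1 < s")
      case True then show ?thesis using st[of "i+1+k"] that by (simp add: v_def)
    next
      case False then have k: "k + 1 = s" using that by simp
      then have j: "Suc (i + 1 + k) = j0" using s2 by (simp add: s_def)
      have "odd i" using k that evs by auto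
      then have "snd (f (Suc i)) = snd (f i)" using st[of i] by simp
      moreover have "snd (f j0) = snd (f (i+1+k))" using st[of "i+1+k"] that j by simp
      ultimately show ?thesis using k ij by (simp add: v_def)
    qed
    have "is_circuit_in V s v"
      by (rule circuit_intro[OF evs s2 inj, where c = "i+1"])
        (use fW sub vE vO in \<open>auto simp: v_def\<close>)
    then show ?thesis by blast
  qed
qed


lemma pred_mod:
  assumes "b < (s::nat)"
  shows "(b + s - 1) mod s < s \<and> ((b + s - 1) mod s + 1) mod s = b"
proof (cases "b = 0")
  case True then show ?thesis using assms by simp
next
  case False
  then have "(b + s - 1) mod s = b - 1"
  proof -
    have e: "b + s - 1 = (b - 1) + s" using False by simp
    have "((b - 1) + s) mod s = (b - 1) mod s" by (rule mod_add_self2)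
    also have "\<dots> = b - 1" using assms by simp
    finally show ?thesis unfolding e using assms False by simp
  qed
  then show ?thesis using assms False by simp
qed

lemma alt_count:
  fixes v :: "nat \<Rightarrow> nat \<times> nat" and g :: "nat \<times> nat \<Rightarrow> nat" and Q :: "nat \<Rightarrow> bool"
  assumes s: "s > 0"
    and Qd: "\<forall>k<s. Q k \<longleftrightarrow> g (v k) = g (v ((k+1) mod s))"
    and alt: "\<forall>k<s. Q ((k+1) mod s) \<longleftrightarrow> \<not> Q k"
  shows "card {k. k < s \<and> g (v k) = t \<and> Q k} = card {k. k < s \<and> g (v k) = t \<and> \<not> Q k}"
proof (rule bij_betw_same_card)
  let ?f = "\<lambda>k. (k+1) mod s" and ?f' = "\<lambda>k. (k + s - 1) mod s"
  show "bij_betw ?f {k. k < s \<and> g (v k) = t \<and> Q k} {k. k < s \<and> g (v k) = t \<and> \<not> Q k}"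
  proof (rule bij_betw_byWitness[where f' = ?f'])
    show "\<forall>a\<in>{k. k < s \<and> g (v k) = t \<and> Q k}. ?f' (?f a) = a"
    proof
      fix a assume a: "a \<in> {k. k < s \<and> g (v k) = t \<and> Q k}"
      show "?f' (?f a) = a"
      proof (cases "a + 1 < s")
        case True then show ?thesis by simp
      next
        case False then have "a + 1 = s" using a by simp
        then show ?thesis by simp
      qed
    qed
    show "\<forall>a\<in>{k. k < s \<and> g (v k) = t \<and> \<not> Q k}. ?f (?f' a) = a"
      using pred_mod by blast
    show "?f ` {k. k < s \<and> g (v k) = t \<and> Q k} \<subseteq> {k. k < s \<and> g (v k) = t \<and> \<not> Q k}"
      using Qd alt s by auto
    show "?f' ` {k. k < s \<and> g (v k) = t \<and> \<not> Q k} \<subseteq> {k. k < s \<and> g (v k) = t \<and> Q k}"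
    proof
      fix x assume "x \<in> ?f' ` {k. k < s \<and> g (v k) = t \<and> \<not> Q k}"
      then obtain b where b: "b < s" "g (v b) = t" "\<not> Q b" and x: "x = ?f' b" by blast
      have xs: "x < s" and fx: "?f x = b" using pred_mod[OF b(1)] x by auto
      have "Q x" using alt[rule_format, OF xs] fx b(3) by simp
      then have "g (v x) = t" using Qd[rule_format, OF xs] fx b(2) by simp
      then show "x \<in> {k. k < s \<and> g (v k) = t \<and> Q k}" using xs \<open>Q x\<close> by simp
    qed
  qed
qed

lemma circuit_weights:
  assumes finV: "finite V" and C: "is_circuit_in V s v"
  shows "\<exists>w :: nat \<times> nat \<Rightarrow> int. (\<exists>p\<in>V. w p \<noteq> 0) \<and>
     (\<forall>t. (\<Sum>p\<in>{p\<in>V. fst p = t}. w p) = 0) \<and> (\<forall>r. (\<Sum>p\<in>{p\<in>V. snd p = r}. w p) = 0)"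
proof -
  have s4: "s \<ge> 4" and inV: "\<forall>k<s. v k \<in> V" and inj: "inj_on v {..<s}"
    and adj: "\<forall>k<s. adjacent (v k) (v ((k + 1) mod s))"
    and df: "\<forall>k<s. (int (fst (v ((k + 2) mod s))) - int (fst (v k))) *
        (int (snd (v ((k + 2) mod s))) - int (snd (v k))) \<noteq> 0"
    using C unfolding is_circuit_in_def by auto
  have s0: "s > 0" using s4 by simp
  define R where "R k = (fst (v k) = fst (v ((k+1) mod s)))" for k
  define Cs where "Cs k = (snd (v k) = snd (v ((k+1) mod s)))" for k
  have CR: "Cs k \<longleftrightarrow> \<not> R k" if "k < s" for k
    using adj that unfolding adjacent_def R_def Cs_def by (auto simp: prod_eq_iff)
  have altR: "R ((k+1) mod s) \<longleftrightarrow> \<not> R k" if k: "k < s" for k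
  proof -
    define k1 where "k1 = (k+1) mod s"
    have k1s: "k1 < s" using s0 by (simp add: k1_def)
    have kk2: "(k+2) mod s = (k1+1) mod s" by (simp add: k1_def mod_Suc_eq)
    have d: "(int (fst (v ((k1+1) mod s))) - int (fst (v k))) *
        (int (snd (v ((k1+1) mod s))) - int (snd (v k))) \<noteq> 0" using df[rule_format, OF k] unfolding kk2 .
    have "\<not> (R k \<and> R k1)" using d unfolding R_def k1_def by auto
    moreover have "\<not> (Cs k \<and> Cs k1)" using d unfolding Cs_def k1_def by auto
    ultimately show ?thesis using CR k k1s unfolding k1_def by blast
  qed
  have altC: "Cs ((k+1) mod s) \<longleftrightarrow> \<not> Cs k" if k: "k < s" for k
    using altR[OF k] CR[OF k] CR[of "(k+1) mod s"] s0 by simp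
  define c where "c k = (if R k then 1 else -1 :: int)" for k
  define w where "w p = (\<Sum>k\<in>{k. k < s \<and> v k = p}. c k)" for p
  have grp: "(\<Sum>p\<in>{p\<in>V. g p = t}. w p) = (\<Sum>k\<in>{k. k < s \<and> g (v k) = t}. c k)" for g :: "nat \<times> nat \<Rightarrow> nat" and t
  proof -
    have "(\<Sum>p\<in>{p\<in>V. g p = t}. w p) =
          (\<Sum>p\<in>{p\<in>V. g p = t}. sum c {k. k \<in> {k. k < s \<and> g (v k) = t} \<and> v k = p})"
      unfolding w_def by (rule sum.cong[OF refl], rule arg_cong[where f = "sum c"]) auto
    also have "\<dots> = (\<Sum>k\<in>{k. k < s \<and> g (v k) = t}. c k)"
      by (rule sum.group) (use finV inV in auto)
    finally show ?thesis .
  qed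
  have rows: "(\<Sum>p\<in>{p\<in>V. fst p = t}. w p) = 0" for t
  proof -
    have "(\<Sum>k\<in>{k. k < s \<and> fst (v k) = t}. c k) =
      int (card {k. k < s \<and> fst (v k) = t \<and> R k}) - int (card {k. k < s \<and> fst (v k) = t \<and> \<not> R k})"
      unfolding c_def by (subst sum.If_cases) (auto simp: Int_def)
    also have "\<dots> = 0" using alt_count[of s R fst v t] s0 altR unfolding R_def by auto
    finally show ?thesis using grp[of fst t] by simp
  qed
  have cols: "(\<Sum>p\<in>{p\<in>V. snd p = r}. w p) = 0" for r
  proof -
    have "(\<Sum>k\<in>{k. k < s \<and> snd (v k) = r}. c k) = (\<Sum>k\<in>{k. k < s \<and> snd (v k) = r}. if Cs k then -1 else 1)"
      unfolding c_def by (rule sum.cong) (use CR in auto)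
    also have "\<dots> = - int (card {k. k < s \<and> snd (v k) = r \<and> Cs k}) + int (card {k. k < s \<and> snd (v k) = r \<and> \<not> Cs k})"
      by (subst sum.If_cases) (auto simp: Int_def)
    also have "\<dots> = 0" using alt_count[of s Cs snd v r] s0 altC unfolding Cs_def by auto
    finally show ?thesis using grp[of snd r] by simp
  qed
  have "{k. k < s \<and> v k = v 0} = {0}" using inj s0 by (auto simp: inj_on_def)
  then have "w (v 0) \<noteq> 0" unfolding w_def c_def by simp
  moreover have "v 0 \<in> V" using inV s0 by simp
  ultimately show ?thesis using rows cols by blast
qed


definition pt :: "nat \<Rightarrow> (nat \<times> nat) set \<Rightarrow> nat \<Rightarrow> nat \<times> nat" where
  "pt n V k = phi n (sorted_list_of_set (idx_set n V) ! k)"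

lemma phi_phi_inv:
  assumes "p \<in> grid m n"
  shows "phi n (phi_inv n p) = p"
proof -
  obtain t r where p: "p = (t, r)" "1 \<le> t" "t \<le> m" "1 \<le> r" "r \<le> n"
    using assms unfolding grid_def by auto
  have e: "phi_inv n p - 1 = (t - 1) * n + (r - 1)" using p by (simp add: phi_inv_def)
  have "r - 1 < n" using p by simp
  then have "((t - 1) * n + (r - 1)) div n = t - 1" "((t - 1) * n + (r - 1)) mod n = r - 1"
    by simp_all
  then show ?thesis unfolding phi_def e using p by simp
qed

lemma pt_bij:
  assumes "V \<subseteq> grid m n"
  shows "bij_betw (pt n V) {..<card V} V"
proof -
  have finV: "finite V" using assms finite_subset unfolding grid_def by blast
  have b1: "bij_betw (phi n) (idx_set n V) V"
  proof (rule bij_betw_byWitness[where f' = "phi_inv n"])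
    show "\<forall>a\<in>idx_set n V. phi_inv n (phi n a) = a"
      using assms phi_phi_inv unfolding idx_set_def by fastforce
    show "\<forall>a'\<in>V. phi n (phi_inv n a') = a'" using assms phi_phi_inv by blast
    show "phi n ` idx_set n V \<subseteq> V" using assms phi_phi_inv unfolding idx_set_def by fastforce
    show "phi_inv n ` V \<subseteq> idx_set n V" unfolding idx_set_def by blast
  qed
  have fin: "finite (idx_set n V)" using finV unfolding idx_set_def by simp
  have cardeq: "card (idx_set n V) = card V" using bij_betw_same_card[OF b1] by simp
  let ?L = "sorted_list_of_set (idx_set n V)"
  have b2: "bij_betw ((!) ?L) {..<card V} (idx_set n V)"
    by (rule bij_betw_nth) (use fin cardeq in auto)
  have "bij_betw (phi n \<circ> (!) ?L) {..<card V} V" by (rule bij_betw_trans[OF b2 b1])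
  then show ?thesis unfolding pt_def comp_def by simp
qed

definition cnd :: "nat \<Rightarrow> nat \<Rightarrow> nat \<Rightarrow> nat \<times> nat \<Rightarrow> bool" where
  "cnd m n s p \<longleftrightarrow> (s + 1 = fst p \<and> fst p < m) \<or> s + 1 = m \<or> (s + 1 = m + snd p \<and> m + snd p < m + n)"

lemma sm_carrier: "structure_matrix m n V \<in> carrier_mat (m+n-1) (m+n-1)"
  unfolding structure_matrix_def by simp

lemma sm_entry:
  assumes "s < m + n - 1" "k < m + n - 1"
  shows "structure_matrix m n V $$ (s, k) = (if cnd m n s (pt n V k) then 1 else 0)"
  using assms unfolding structure_matrix_def cnd_def pt_def by (simp add: Let_def)

definition vset :: "nat \<Rightarrow> nat \<Rightarrow> (nat \<times> nat) set \<Rightarrow> nat \<Rightarrow> (nat \<times> nat) set" where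
  "vset m n V s = (if s + 1 < m then {p\<in>V. fst p = s + 1} else if s + 1 = m then V else {p\<in>V. snd p = s + 1 - m})"

lemma cnd_vset:
  assumes "V \<subseteq> grid m n" "s < m + n - 1" "p \<in> V"
  shows "cnd m n s p \<longleftrightarrow> p \<in> vset m n V s"
proof -
  have "1 \<le> fst p" "fst p \<le> m" "1 \<le> snd p" "snd p \<le> n" using assms unfolding grid_def by auto
  then show ?thesis using assms unfolding cnd_def vset_def by auto
qed

lemma row_sum_eq:
  fixes f :: "nat \<times> nat \<Rightarrow> int"
  assumes sub: "V \<subseteq> grid m n" and cV: "card V = m + n - 1" and s: "s < m + n - 1"
  shows "(\<Sum>k\<in>{0..<m+n-1}. structure_matrix m n V $$ (s, k) * f (pt n V k)) = (\<Sum>p\<in>vset m n V s. f p)"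
proof -
  have finV: "finite V" using sub finite_subset unfolding grid_def by blast
  have b: "bij_betw (pt n V) {0..<m+n-1} V" using pt_bij[OF sub] cV by (simp add: atLeast0LessThan)
  have "(\<Sum>k\<in>{0..<m+n-1}. structure_matrix m n V $$ (s, k) * f (pt n V k))
       = (\<Sum>k\<in>{0..<m+n-1}. (if cnd m n s (pt n V k) then f (pt n V k) else 0))"
    by (rule sum.cong) (use s in \<open>auto simp: sm_entry\<close>)
  also have "\<dots> = (\<Sum>p\<in>V. (if cnd m n s p then f p else 0))"
    by (rule sum.reindex_bij_betw[OF b])
  also have "\<dots> = (\<Sum>p\<in>V. (if p \<in> vset m n V s then f p else 0))"
    by (rule sum.cong) (use cnd_vset[OF sub s] in auto)
  also have "\<dots> = (\<Sum>p\<in>vset m n V s. f p)"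
    using finV by (simp add: sum.inter_filter[symmetric]) (rule sum.cong, auto simp: vset_def)
  finally show ?thesis .
qed


lemma other_nz:
  fixes w :: "'a \<Rightarrow> int"
  assumes "finite A" "p \<in> A" "sum w A = 0" "w p \<noteq> 0"
  shows "\<exists>q\<in>A. q \<noteq> p \<and> w q \<noteq> 0"
proof (rule ccontr)
  assume "\<not> ?thesis"
  then have "sum w (A - {p}) = 0" by (intro sum.neutral) auto
  then have "sum w A = w p" using sum.remove[OF assms(1,2), of w] by simp
  then show False using assms by simp
qed

lemma mult_x_eq:
  assumes sub: "V \<subseteq> grid m n" and cV: "card V = m + n - 1" and s: "s < m + n - 1"
    and x: "x \<in> carrier_vec (m+n-1)" and wpt: "\<forall>k<m+n-1. x $ k = w (pt n V k)"
  shows "(structure_matrix m n V *\<^sub>v x) $ s = (\<Sum>p\<in>vset m n V s. w p)"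
proof -
  have "(structure_matrix m n V *\<^sub>v x) $ s = row (structure_matrix m n V) s \<bullet> x"
    using s sm_carrier[of m n V] by simp
  also have "\<dots> = (\<Sum>k\<in>{0..<m+n-1}. structure_matrix m n V $$ (s, k) * w (pt n V k))"
    unfolding scalar_prod_def using x s sm_carrier[of m n V] wpt by (intro sum.cong) auto
  also have "\<dots> = (\<Sum>p\<in>vset m n V s. w p)" by (rule row_sum_eq[OF sub cV s])
  finally show ?thesis .
qed

lemma det_zero_of_w:
  fixes w :: "nat \<times> nat \<Rightarrow> int"
  assumes sub: "V \<subseteq> grid m n" and cV: "card V = m + n - 1" and m2: "m \<ge> 2"
    and nz: "\<exists>p\<in>V. w p \<noteq> 0"
    and rows: "\<forall>t. (\<Sum>p\<in>{p\<in>V. fst p = t}. w p) = 0"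
    and cols: "\<forall>r. (\<Sum>p\<in>{p\<in>V. snd p = r}. w p) = 0"
  shows "det (structure_matrix m n V) = 0"
proof -
  let ?N = "m + n - 1"
  have finV: "finite V" using sub finite_subset unfolding grid_def by blast
  have b: "bij_betw (pt n V) {..<?N} V" using pt_bij[OF sub] cV by simp
  have tot: "(\<Sum>p\<in>V. w p) = 0"
  proof -
    have "(\<Sum>p\<in>V. w p) = (\<Sum>t\<in>fst ` V. (\<Sum>p\<in>{p\<in>V. fst p = t}. w p))"
      by (rule sum.group[symmetric]) (use finV in auto)
    then show ?thesis using rows by simp
  qed
  define x where "x = vec ?N (\<lambda>k. w (pt n V k))"
  have xc: "x \<in> carrier_vec ?N" by (simp add: x_def)
  have wpt: "\<forall>k<?N. x $ k = w (pt n V k)" by (simp add: x_def)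
  have "x \<noteq> 0\<^sub>v ?N"
  proof
    assume x0: "x = 0\<^sub>v ?N"
    obtain p where p: "p \<in> V" "w p \<noteq> 0" using nz by blast
    have "p \<in> pt n V ` {..<?N}" using b p(1) unfolding bij_betw_def by simp
    then obtain k where k: "k < ?N" "pt n V k = p" by blast
    have "x $ k = 0" using x0 k by simp
    then show False using wpt k p by simp
  qed
  moreover have "structure_matrix m n V *\<^sub>v x = 0\<^sub>v ?N"
  proof (rule eq_vecI)
    show "dim_vec (structure_matrix m n V *\<^sub>v x) = dim_vec (0\<^sub>v ?N)" using sm_carrier[of m n V] by simp
  next
    fix s assume "s < dim_vec (0\<^sub>v ?N :: int vec)"
    then have s: "s < ?N" by simp
    have "(structure_matrix m n V *\<^sub>v x) $ s = (\<Sum>p\<in>vset m n V s. w p)"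
      by (rule mult_x_eq[OF sub cV s xc wpt])
    also have "\<dots> = 0" using rows cols tot unfolding vset_def by auto
    finally show "(structure_matrix m n V *\<^sub>v x) $ s = 0\<^sub>v ?N $ s" using s by simp
  qed
  ultimately show ?thesis using det_0_iff_vec_prod_zero[OF sm_carrier] xc by blast
qed

lemma det_nz_of_tree:
  assumes sub: "V \<subseteq> grid m n" and cV: "card V = m + n - 1" and m2: "m \<ge> 2" and n2: "n \<ge> 2"
    and tree: "is_tree V"
  shows "det (structure_matrix m n V) \<noteq> 0"
proof
  assume "det (structure_matrix m n V) = 0"
  let ?N = "m + n - 1"
  obtain x where xc: "x \<in> carrier_vec ?N" and xnz: "x \<noteq> 0\<^sub>v ?N"
    and ax: "structure_matrix m n V *\<^sub>v x = 0\<^sub>v ?N"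
    using det_0_iff_vec_prod_zero[OF sm_carrier] \<open>det _ = 0\<close> by blast
  have finV: "finite V" using sub finite_subset unfolding grid_def by blast
  have b: "bij_betw (pt n V) {..<?N} V" using pt_bij[OF sub] cV by simp
  define w where "w p = x $ (the_inv_into {..<?N} (pt n V) p)" for p
  have wpt: "\<forall>k<?N. x $ k = w (pt n V k)"
    using b unfolding w_def bij_betw_def by (simp add: the_inv_into_f_f)
  have vs0: "(\<Sum>p\<in>vset m n V s. w p) = 0" if s: "s < ?N" for s
    using mult_x_eq[OF sub cV s xc wpt] ax s by simp
  have tot: "(\<Sum>p\<in>V. w p) = 0" using vs0[of "m - 1"] m2 n2 unfolding vset_def by simp
  have rlt: "(\<Sum>p\<in>{p\<in>V. fst p = t}. w p) = 0" if "1 \<le> t" "t < m" for t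
    using vs0[of "t - 1"] that n2 unfolding vset_def by simp
  have clt: "(\<Sum>p\<in>{p\<in>V. snd p = r}. w p) = 0" if "1 \<le> r" "r < n" for r
    using vs0[of "m + r - 1"] that m2 unfolding vset_def by simp
  have rows: "(\<Sum>p\<in>{p\<in>V. fst p = t}. w p) = 0" if "t \<in> {1..m}" for t
  proof (cases "t < m")
    case True then show ?thesis using rlt that by simp
  next
    case False then have t: "t = m" using that by simp
    have "(\<Sum>p\<in>V. w p) = (\<Sum>t\<in>{1..m}. (\<Sum>p\<in>{p\<in>V. fst p = t}. w p))"
      by (rule sum.group[symmetric]) (use finV sub in \<open>auto simp: grid_def\<close>)
    also have "\<dots> = (\<Sum>t\<in>{1..<m}. (\<Sum>p\<in>{p\<in>V. fst p = t}. w p)) + (\<Sum>p\<in>{p\<in>V. fst p = m}. w p)"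
      using m2 by (simp add: atLeastLessThanSuc_atLeastAtMost[symmetric] sum.atLeastLessThan_Suc)
    also have "\<dots> = (\<Sum>p\<in>{p\<in>V. fst p = m}. w p)" using rlt by simp
    finally show ?thesis using tot t by simp
  qed
  have cols: "(\<Sum>p\<in>{p\<in>V. snd p = r}. w p) = 0" if "r \<in> {1..n}" for r
  proof (cases "r < n")
    case True then show ?thesis using clt that by simp
  next
    case False then have r: "r = n" using that by simp
    have "(\<Sum>p\<in>V. w p) = (\<Sum>r\<in>{1..n}. (\<Sum>p\<in>{p\<in>V. snd p = r}. w p))"
      by (rule sum.group[symmetric]) (use finV sub in \<open>auto simp: grid_def\<close>)
    also have "\<dots> = (\<Sum>r\<in>{1..<n}. (\<Sum>p\<in>{p\<in>V. snd p = r}. w p)) + (\<Sum>p\<in>{p\<in>V. snd p = n}. w p)"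
      using n2 by (simp add: atLeastLessThanSuc_atLeastAtMost[symmetric] sum.atLeastLessThan_Suc)
    also have "\<dots> = (\<Sum>p\<in>{p\<in>V. snd p = n}. w p)" using clt by simp
    finally show ?thesis using tot r by simp
  qed
  define W where "W = {p\<in>V. w p \<noteq> 0}"
  have rowP: "\<forall>p\<in>W. \<exists>q\<in>W. q \<noteq> p \<and> fst q = fst p"
  proof
    fix p assume p: "p \<in> W"
    then have "fst p \<in> {1..m}" using sub unfolding W_def grid_def by auto
    then have "(\<Sum>q\<in>{q\<in>V. fst q = fst p}. w q) = 0" by (rule rows)
    then obtain q where "q \<in> {q\<in>V. fst q = fst p}" "q \<noteq> p" "w q \<noteq> 0"
      using other_nz[of "{q\<in>V. fst q = fst p}" p w] finV p unfolding W_def by auto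
    then show "\<exists>q\<in>W. q \<noteq> p \<and> fst q = fst p" unfolding W_def by blast
  qed
  have colP: "\<forall>p\<in>W. \<exists>q\<in>W. q \<noteq> p \<and> snd q = snd p"
  proof
    fix p assume p: "p \<in> W"
    then have "snd p \<in> {1..n}" using sub unfolding W_def grid_def by auto
    then have "(\<Sum>q\<in>{q\<in>V. snd q = snd p}. w q) = 0" by (rule cols)
    then obtain q where "q \<in> {q\<in>V. snd q = snd p}" "q \<noteq> p" "w q \<noteq> 0"
      using other_nz[of "{q\<in>V. snd q = snd p}" p w] finV p unfolding W_def by auto
    then show "\<exists>q\<in>W. q \<noteq> p \<and> snd q = snd p" unfolding W_def by blast
  qed
  obtain k where k: "k < ?N" "x $ k \<noteq> 0"
  proof (rule ccontr)
    assume "\<not> thesis"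
    then have "\<forall>k<?N. x $ k = 0" using that by blast
    then have "x = 0\<^sub>v ?N" using xc by (intro eq_vecI) auto
    then show False using xnz by simp
  qed
  have p0: "pt n V k \<in> W" using k wpt b unfolding W_def bij_betw_def by auto
  have "finite W" using finV unfolding W_def by simp
  then obtain s v where "is_circuit_in V s v"
    using circ_from_support[OF _ p0 _ rowP colP] unfolding W_def by blast
  then show False using tree unfolding is_tree_def by blast
qed


definition reach :: "(nat \<times> nat) set \<Rightarrow> nat \<times> nat \<Rightarrow> nat \<times> nat \<Rightarrow> bool" where
  "reach V p q \<longleftrightarrow> (\<exists>xs. xs \<noteq> [] \<and> hd xs = p \<and> last xs = q \<and>
       set xs \<subseteq> V \<and> (\<forall>i. Suc i < length xs \<longrightarrow> adjacent (xs ! i) (xs ! Suc i)))"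

lemma reach_refl: "p \<in> V \<Longrightarrow> reach V p p"
  unfolding reach_def by (rule exI[of _ "[p]"]) simp

lemma reach_ext:
  assumes "reach V p z" "y \<in> V" "adjacent z y"
  shows "reach V p y"
proof -
  obtain xs where xs: "xs \<noteq> []" "hd xs = p" "last xs = z" "set xs \<subseteq> V"
    "\<forall>i. Suc i < length xs \<longrightarrow> adjacent (xs ! i) (xs ! Suc i)"
    using assms(1) unfolding reach_def by blast
  have "\<forall>i. Suc i < length (xs @ [y]) \<longrightarrow> adjacent ((xs @ [y]) ! i) ((xs @ [y]) ! Suc i)"
  proof (intro allI impI)
    fix i assume i: "Suc i < length (xs @ [y])"
    show "adjacent ((xs @ [y]) ! i) ((xs @ [y]) ! Suc i)"
    proof (cases "Suc i < length xs")
      case True then show ?thesis using xs(5) by (simp add: nth_append)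
    next
      case False then have "Suc i = length xs" using i by simp
      then have ii: "i < length xs" "i = length xs - 1" by auto
      have "(xs @ [y]) ! i = z" using xs(1,3) ii by (simp add: nth_append last_conv_nth)
      moreover have "(xs @ [y]) ! Suc i = y" using \<open>Suc i = length xs\<close> by (simp add: nth_append)
      ultimately have "(xs @ [y]) ! i = z" "(xs @ [y]) ! Suc i = y" by auto
      then show ?thesis using assms(3) by simp
    qed
  qed
  then show ?thesis unfolding reach_def using xs assms(2)
    by (intro exI[of _ "xs @ [y]"]) auto
qed

lemma reach_line:
  assumes "reach V p z" "y \<in> V" "fst y = fst z \<or> snd y = snd z"
  shows "reach V p y"
proof (cases "y = z")
  case True then show ?thesis using assms by simp
next
  case False then have "adjacent z y" using assms(3) unfolding adjacent_def by auto
  then show ?thesis using reach_ext assms by blast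
qed

lemma conn_of_det:
  assumes sub: "V \<subseteq> grid m n" and cV: "card V = m + n - 1" and m2: "m \<ge> 2" and n2: "n \<ge> 2"
    and dnz: "det (structure_matrix m n V) \<noteq> 0"
  shows "connected_set V"
proof (rule ccontr)
  assume "\<not> connected_set V"
  then obtain p q where p: "p \<in> V" and q: "q \<in> V" and nr: "\<not> reach V p q"
    unfolding connected_set_def reach_def by blast
  let ?N = "m + n - 1"
  let ?A = "structure_matrix m n V"
  define C where "C = {z\<in>V. reach V p z}"
  define u where "u t = (if \<exists>z\<in>C. fst z = t then 1 else 0 :: int)" for t
  define vv where "vv r = (if \<exists>z\<in>C. snd z = r then -1 else 0 :: int)" for r
  have key: "u (fst a) + vv (snd a) = 0" if a: "a \<in> V" for a
  proof (cases "a \<in> C")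
    case True then show ?thesis unfolding u_def vv_def by auto
  next
    case False
    have "\<not> (\<exists>z\<in>C. fst z = fst a)"
    proof
      assume "\<exists>z\<in>C. fst z = fst a"
      then obtain z where "z \<in> C" "fst z = fst a" by blast
      then have "reach V p a" using reach_line[of V p z a] a unfolding C_def by auto
      then show False using False a unfolding C_def by auto
    qed
    moreover have "\<not> (\<exists>z\<in>C. snd z = snd a)"
    proof
      assume "\<exists>z\<in>C. snd z = snd a"
      then obtain z where "z \<in> C" "snd z = snd a" by blast
      then have "reach V p a" using reach_line[of V p z a] a unfolding C_def by auto
      then show False using False a unfolding C_def by auto
    qed
    ultimately show ?thesis unfolding u_def vv_def by simp
  qed
  define Y where "Y \<sigma> = (if \<sigma> < m then u \<sigma> - u m else if \<sigma> = m then u m + vv n else vv (\<sigma> - m) - vv n)" for \<sigma>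
  define y where "y = vec ?N (\<lambda>s. Y (s + 1))"
  have yc: "y \<in> carrier_vec ?N" by (simp add: y_def)
  have b: "bij_betw (pt n V) {..<?N} V" using pt_bij[OF sub] cV by simp
  have Ac: "?A \<in> carrier_mat ?N ?N" by (rule sm_carrier)
  have "transpose_mat ?A *\<^sub>v y = 0\<^sub>v ?N"
  proof (rule eq_vecI)
    show "dim_vec (transpose_mat ?A *\<^sub>v y) = dim_vec (0\<^sub>v ?N)" using Ac by simp
  next
    fix k assume "k < dim_vec (0\<^sub>v ?N :: int vec)"
    then have k: "k < ?N" by simp
    define a where "a = pt n V k"
    have aV: "a \<in> V" using b k unfolding a_def bij_betw_def by auto
    then have ab: "1 \<le> fst a" "fst a \<le> m" "1 \<le> snd a" "snd a \<le> n" using sub unfolding grid_def by auto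
    have "(transpose_mat ?A *\<^sub>v y) $ k = col ?A k \<bullet> y" using Ac k by simp
    also have "\<dots> = (\<Sum>s\<in>{0..<?N}. (if cnd m n s a then Y (s + 1) else 0))"
      unfolding scalar_prod_def using Ac k yc by (intro sum.cong) (auto simp: sm_entry a_def y_def)
    also have "\<dots> = (\<Sum>s\<in>{s\<in>{0..<?N}. cnd m n s a}. Y (s + 1))"
      by (rule sum.inter_filter[symmetric]) simp
    also have "\<dots> = u (fst a) + vv (snd a)"
    proof (cases "fst a < m")
      case True
      show ?thesis
      proof (cases "snd a < n")
        case True
        have "{s\<in>{0..<?N}. cnd m n s a} = {fst a - 1, m - 1, m + snd a - 1}"
          using ab \<open>fst a < m\<close> True m2 n2 unfolding cnd_def by auto
        moreover have "fst a - 1 \<noteq> m - 1" "fst a - 1 \<noteq> m + snd a - 1" "m - 1 \<noteq> m + snd a - 1"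
          using ab \<open>fst a < m\<close> m2 by auto
        ultimately show ?thesis using ab \<open>fst a < m\<close> True m2 unfolding Y_def by simp
      next
        case False
        have "{s\<in>{0..<?N}. cnd m n s a} = {fst a - 1, m - 1}"
          using ab \<open>fst a < m\<close> False m2 n2 unfolding cnd_def by auto
        moreover have "fst a - 1 \<noteq> m - 1" using ab \<open>fst a < m\<close> m2 by auto
        ultimately show ?thesis using ab \<open>fst a < m\<close> False m2 unfolding Y_def by simp
      qed
    next
      case False
      show ?thesis
      proof (cases "snd a < n")
        case True
        have "{s\<in>{0..<?N}. cnd m n s a} = {m - 1, m + snd a - 1}"
          using ab False True m2 n2 unfolding cnd_def by auto
        moreover have "m - 1 \<noteq> m + snd a - 1" using ab m2 by auto
        ultimately show ?thesis using ab False True m2 unfolding Y_def by simp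
      next
        case False2: False
        have "{s\<in>{0..<?N}. cnd m n s a} = {m - 1}"
          using ab False False2 m2 n2 unfolding cnd_def by auto
        then show ?thesis using ab False False2 m2 unfolding Y_def by simp
      qed
    qed
    also have "\<dots> = 0" using key[OF aV] .
    finally show "(transpose_mat ?A *\<^sub>v y) $ k = 0\<^sub>v ?N $ k" using k by simp
  qed
  moreover have "y \<noteq> 0\<^sub>v ?N"
  proof
    assume y0: "y = 0\<^sub>v ?N"
    have Y0: "Y \<sigma> = 0" if "1 \<le> \<sigma>" "\<sigma> \<le> ?N" for \<sigma>
    proof -
      have "y $ (\<sigma> - 1) = 0" using y0 that by simp
      then show ?thesis using that unfolding y_def by simp
    qed
    have pC: "p \<in> C" using p reach_refl unfolding C_def by blast
    have up: "u (fst p) = 1" using pC unfolding u_def by auto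
    have uq: "u (fst q) = 0"
    proof -
      have "\<not> (\<exists>z\<in>C. fst z = fst q)"
      proof
        assume "\<exists>z\<in>C. fst z = fst q"
        then obtain z where "z \<in> C" "fst z = fst q" by blast
        then have "reach V p q" using reach_line[of V p z q] q unfolding C_def by auto
        then show False using nr by simp
      qed
      then show ?thesis unfolding u_def by simp
    qed
    have pb: "1 \<le> fst p" "fst p \<le> m" "1 \<le> fst q" "fst q \<le> m" using p q sub unfolding grid_def by auto
    have um: "u m = 1"
    proof (cases "fst p < m")
      case True then have "Y (fst p) = 0" using Y0 pb n2 by simp
      then show ?thesis using up True unfolding Y_def by simp
    next
      case False then show ?thesis using up pb by simp
    qed
    show False
    proof (cases "fst q < m")
      case True then have "Y (fst q) = 0" using Y0 pb n2 by simp
      then show ?thesis using uq um True unfolding Y_def by simp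
    next
      case False then show ?thesis using uq um pb by simp
    qed
  qed
  ultimately have "det (transpose_mat ?A) = 0"
    using det_0_iff_vec_prod_zero[of "transpose_mat ?A" ?N] Ac yc by auto
  then show False using det_transpose[OF Ac] dnz by simp
qed


theorem theorem3p1:
  fixes m n :: nat and V :: "(nat \<times> nat) set"
  assumes "m \<ge> 2" and "n \<ge> 2"
    and "V \<subseteq> grid m n" and "card V = m + n - 1"
  shows "is_tree V \<longleftrightarrow> det (structure_matrix m n V) \<noteq> 0"
proof
  assume "is_tree V"
  then show "det (structure_matrix m n V) \<noteq> 0"
    using det_nz_of_tree assms by blast
next
  assume d: "det (structure_matrix m n V) \<noteq> 0"
  have finV: "finite V" using assms(3) finite_subset unfolding grid_def by blast
  have c: "connected_set V" using conn_of_det[OF assms(3,4,1,2) d] .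
  have "\<not> (\<exists>s v. is_circuit_in V s v)"
  proof
    assume "\<exists>s v. is_circuit_in V s v"
    then obtain s v where "is_circuit_in V s v" by blast
    then obtain w :: "nat \<times> nat \<Rightarrow> int" where "\<exists>p\<in>V. w p \<noteq> 0"
      "\<forall>t. (\<Sum>p\<in>{p\<in>V. fst p = t}. w p) = 0" "\<forall>r. (\<Sum>p\<in>{p\<in>V. snd p = r}. w p) = 0"
      using circuit_weights[OF finV] by blast
    then have "det (structure_matrix m n V) = 0"
      using det_zero_of_w[OF assms(3,4,1)] by blast
    then show False using d by simp
  qed
  then show "is_tree V" using c unfolding is_tree_def by blast
qed

end
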